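(* Let $n\ge1$, $\rho\in\mathbb{R}$, and let $Q_n$ be the $(4n+3)$-dimensional quaternion Lie group with left-invariant frame $e_1,\dots,e_{4n+3}$ as described in the context. Let $g_0$ be a left-invariant metric on $Q_n$ diagonal in this frame, and let $g(t)$ be a solution of the Ricci–Bourguignon flow $\frac{\partial}{\partial t}g(t)=-2\mathrm{Ric}(g(t))+2\rho R(g(t))g(t)$, $g(0)=g_0$, by left-invariant metrics diagonal in this frame, with components $g_\alpha(t)=g(t)(e_\alpha,e_\alpha)$. Then: (a) $\frac{d}{dt}\Big(g_1(t)g_2(t)\cdots g_{4n}(t)\big(g_{4n+1}(t)g_{4n+2}(t)g_{4n+3}(t)\big)^{\frac{2(1-2n\rho)}{1+3\rho}}\Big)=0$; (b) if $\rho<0$ and $G_k(t)=\int_0^t g_k(r)\,dr$ for $k=4n+1,4n+2,4n+3$, then $\lim_{t\to+\infty}G_k(t)=+\infty$; (c) if moreover $g_j(0)=g_1(0)$ for $1\le j\le 4n$ and $g_{4n+1}(0)=g_{4n+2}(0)=g_{4n+3}(0)$, then the solution has the form $g_j(t)=g_1(0)(1+ct)^{\frac{3(1-2n\rho)}{6+2n-6n\rho}}$ for $1\le j\le 4n$, and $g_{4n+k}(t)=g_{4n+1}(0)(1+ct)^{\frac{-n(1+3\rho)}{3+n-3n\rho}}$ for $1\le k\le 3$, where $c=\frac{g_{4n+1}(0)}{g_1(0)^2}(6+2n-6n\rho)$.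
   Context: $Q_n$ is the simply connected 2-step nilpotent Lie group $\mathbb{R}^{4n}\times\mathbb{R}^3$ whose Lie algebra has basis $X_{1l},X_{2l},X_{3l},X_{4l}$ ($1\le l\le n$), $Z_1,Z_2,Z_3$, with nonzero brackets (for each $l$) $[X_{1l},X_{2l}]=-Z_1$, $[X_{1l},X_{3l}]=Z_3$, $[X_{1l},X_{4l}]=Z_2$, $[X_{2l},X_{3l}]=Z_2$, $[X_{2l},X_{4l}]=-Z_3$, $[X_{3l},X_{4l}]=-Z_1$, all other brackets between basis elements being zero (and $Z_1,Z_2,Z_3$ central). Set $e_i=X_{1i}$, $e_{n+i}=X_{2i}$, $e_{2n+i}=X_{3i}$, $e_{3n+i}=X_{4i}$ ($1\le i\le n$), $e_{4n+r}=Z_r$ ($r=1,2,3$), viewed as left-invariant vector fields. A left-invariant metric is diagonal if $g(e_\alpha,e_\beta)=0$ for $\alpha\ne\beta$. For diagonal metrics the flow is equivalent to the ODE system $g_i'=\frac{g_{4n+1}}{g_{n+i}}+\frac{g_{4n+3}}{g_{2n+i}}+\frac{g_{4n+2}}{g_{3n+i}}-\rho g_i\Sigma'$, $g_{n+i}'=\frac{g_{4n+1}}{g_i}+\frac{g_{4n+2}}{g_{2n+i}}+\frac{g_{4n+3}}{g_{3n+i}}-\rho g_{n+i}\Sigma'$, $g_{2n+i}'=\frac{g_{4n+3}}{g_i}+\frac{g_{4n+2}}{g_{n+i}}+\frac{g_{4n+1}}{g_{3n+i}}-\rho g_{2n+i}\Sigma'$, $g_{3n+i}'=\frac{g_{4n+2}}{g_i}+\frac{g_{4n+3}}{g_{n+i}}+\frac{g_{4n+1}}{g_{2n+i}}-\rho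 g_{3n+i}\Sigma'$, $g_{4n+k}'=-g_{4n+k}^2\Sigma_k-\rho g_{4n+k}\Sigma'$, where $\Sigma_1=\sum_{i=1}^n(\frac{1}{g_ig_{n+i}}+\frac{1}{g_{2n+i}g_{3n+i}})$, $\Sigma_2=\sum_{i=1}^n(\frac{1}{g_ig_{3n+i}}+\frac{1}{g_{n+i}g_{2n+i}})$, $\Sigma_3=\sum_{i=1}^n(\frac{1}{g_ig_{2n+i}}+\frac{1}{g_{n+i}g_{3n+i}})$ and $\Sigma'=\sum_{k=1}^3 g_{4n+k}\Sigma_k$ (the scalar curvature is $R=-\frac12\Sigma'$). In part (b) the solution is understood to be defined for all $t\ge0$; in part (c) the formula is understood for $t$ with $1+ct>0$. *)

theory Defs
  imports "HOL-Analysis.Analysis"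
begin

text \<open>Diagonal left-invariant metrics on the quaternion group Q_n are encoded by their
components G 1, ..., G (4n+3), where G a = g(e_a, e_a) in the frame of the context
(e_i = X_1i, e_(n+i) = X_2i, e_(2n+i) = X_3i, e_(3n+i) = X_4i, e_(4n+r) = Z_r).\<close>

definition Sig1 :: "nat \<Rightarrow> (nat \<Rightarrow> real) \<Rightarrow> real" where
  "Sig1 n G = (\<Sum>i=1..n. 1 / (G i * G (n+i)) + 1 / (G (2*n+i) * G (3*n+i)))"

definition Sig2 :: "nat \<Rightarrow> (nat \<Rightarrow> real) \<Rightarrow> real" where
  "Sig2 n G = (\<Sum>i=1..n. 1 / (G i * G (3*n+i)) + 1 / (G (n+i) * G (2*n+i)))"

definition Sig3 :: "nat \<Rightarrow> (nat \<Rightarrow> real) \<Rightarrow> real" where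
  "Sig3 n G = (\<Sum>i=1..n. 1 / (G i * G (2*n+i)) + 1 / (G (n+i) * G (3*n+i)))"

definition SigK :: "nat \<Rightarrow> (nat \<Rightarrow> real) \<Rightarrow> nat \<Rightarrow> real" where
  "SigK n G k = (if k = 1 then Sig1 n G else if k = 2 then Sig2 n G else Sig3 n G)"

text \<open>Sigma' ; the scalar curvature is R = -1/2 Sigma'.\<close>
definition SigP :: "nat \<Rightarrow> (nat \<Rightarrow> real) \<Rightarrow> real" where
  "SigP n G = G (4*n+1) * Sig1 n G + G (4*n+2) * Sig2 n G + G (4*n+3) * Sig3 n G"

text \<open>Right-hand side of the ODE system equivalent to the Ricci-Bourguignon flow
  for diagonal metrics, for the component a (1 <= a <= 4n+3).\<close>
definition qrhs :: "nat \<Rightarrow> real \<Rightarrow> (nat \<Rightarrow> real) \<Rightarrow> nat \<Rightarrow> real" where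
  "qrhs n \<rho> G a =
    (if 1 \<le> a \<and> a \<le> n then
       (let i = a in G (4*n+1) / G (n+i) + G (4*n+3) / G (2*n+i) + G (4*n+2) / G (3*n+i)
                      - \<rho> * G i * SigP n G)
     else if n < a \<and> a \<le> 2*n then
       (let i = a - n in G (4*n+1) / G i + G (4*n+2) / G (2*n+i) + G (4*n+3) / G (3*n+i)
                      - \<rho> * G (n+i) * SigP n G)
     else if 2*n < a \<and> a \<le> 3*n then
       (let i = a - 2*n in G (4*n+3) / G i + G (4*n+2) / G (n+i) + G (4*n+1) / G (3*n+i)
                      - \<rho> * G (2*n+i) * SigP n G)
     else if 3*n < a \<and> a \<le> 4*n then
       (let i = a - 3*n in G (4*n+2) / G i + G (4*n+3) / G (n+i) + G (4*n+1) / G (2*n+i)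
                      - \<rho> * G (3*n+i) * SigP n G)
     else if 4*n < a \<and> a \<le> 4*n+3 then
       (let k = a - 4*n in - G (4*n+k) * G (4*n+k) * SigK n G k - \<rho> * G (4*n+k) * SigP n G)
     else 0)"

definition RB_diag_solution :: "nat \<Rightarrow> real \<Rightarrow> real set \<Rightarrow> (real \<Rightarrow> nat \<Rightarrow> real) \<Rightarrow> bool" where
  "RB_diag_solution n \<rho> J g \<longleftrightarrow>
     is_interval J \<and> 0 \<in> J \<and>
     (\<forall>t\<in>J. \<forall>a\<in>{1..4*n+3}. 0 < g t a \<and>
        ((\<lambda>s. g s a) has_real_derivative qrhs n \<rho> (g t) a) (at t within J))"

end

theory Submission
  imports Defs "HOL-Analysis.Analysis" "HOL-Real_Asymp.Real_Asymp"
begin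


lemma dec_lemma:
  fixes f :: "real \<Rightarrow> real"
  assumes ab: "a \<le> b"
    and d: "\<And>x. x \<in> {a..b} \<Longrightarrow> (f has_real_derivative f' x) (at x within {a..b})"
    and nonpos: "\<And>x. x \<in> {a..b} \<Longrightarrow> f' x \<le> 0"
  shows "f b \<le> f a"
proof -
  have "\<exists>x\<in>{a..b}. f b - f a = (\<lambda>y. f' x * y) (b - a)"
    by (rule mvt_very_simple[OF ab]) (use d in \<open>auto simp: has_field_derivative_def\<close>)
  then obtain x where x: "x \<in> {a..b}" "f b - f a = f' x * (b - a)" by auto
  have "f' x * (b - a) \<le> 0" using nonpos[OF x(1)] ab by (simp add: mult_nonpos_nonneg)
  with x show ?thesis by simp
qed

lemma sum_4blocks:
  fixes f :: "nat \<Rightarrow> real"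
  shows "(\<Sum>j=1..4*n. f j) = (\<Sum>i=1..n. f i + f (n+i) + f (2*n+i) + f (3*n+i))"
proof -
  have sh: "(\<Sum>j=k*n+1..k*n+n. f j) = (\<Sum>i=1..n. f (k*n+i))" for k
    using sum.shift_bounds_cl_nat_ivl[of f 1 "k*n" n] by (simp add: add.commute)
  have split: "(\<Sum>j=1..(k+1)*n. f j) = (\<Sum>j=1..k*n. f j) + (\<Sum>j=k*n+1..k*n+n. f j)" for k
    using sum.ub_add_nat[of 1 "k*n" f n] by (simp add: algebra_simps)
  have "(\<Sum>j=1..4*n. f j) = (\<Sum>j=1..n. f j) + (\<Sum>i=1..n. f (1*n+i)) + (\<Sum>i=1..n. f (2*n+i)) + (\<Sum>i=1..n. f (3*n+i))"
    using split[of 3] split[of 2] split[of 1] split[of 0] sh[of 3] sh[of 2] sh[of 1]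
    by (simp add: numeral_eq_Suc)
  then show ?thesis by (simp add: sum.distrib)
qed



lemma qrhs_X1: "1 \<le> i \<Longrightarrow> i \<le> n \<Longrightarrow> qrhs n \<rho> G i =
  G (4*n+1) / G (n+i) + G (4*n+3) / G (2*n+i) + G (4*n+2) / G (3*n+i) - \<rho> * G i * SigP n G"
  by (simp add: qrhs_def Let_def)
lemma qrhs_X2: "1 \<le> i \<Longrightarrow> i \<le> n \<Longrightarrow> qrhs n \<rho> G (n+i) =
  G (4*n+1) / G i + G (4*n+2) / G (2*n+i) + G (4*n+3) / G (3*n+i) - \<rho> * G (n+i) * SigP n G"
  by (simp add: qrhs_def Let_def)
lemma qrhs_X3: "1 \<le> i \<Longrightarrow> i \<le> n \<Longrightarrow> qrhs n \<rho> G (2*n+i) =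
  G (4*n+3) / G i + G (4*n+2) / G (n+i) + G (4*n+1) / G (3*n+i) - \<rho> * G (2*n+i) * SigP n G"
  by (simp add: qrhs_def Let_def)
lemma qrhs_X4: "1 \<le> i \<Longrightarrow> i \<le> n \<Longrightarrow> qrhs n \<rho> G (3*n+i) =
  G (4*n+2) / G i + G (4*n+3) / G (n+i) + G (4*n+1) / G (2*n+i) - \<rho> * G (3*n+i) * SigP n G"
  by (simp add: qrhs_def Let_def)
lemma qrhs_Z: "1 \<le> k \<Longrightarrow> k \<le> 3 \<Longrightarrow> qrhs n \<rho> G (4*n+k) =
  - G (4*n+k) * G (4*n+k) * SigK n G k - \<rho> * G (4*n+k) * SigP n G"
  by (simp add: qrhs_def Let_def)

lemma key_X:
  assumes pos: "\<forall>a\<in>{1..4*n+3}. G a > 0"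
  shows "(\<Sum>j=1..4*n. qrhs n \<rho> G j / G j) = 2*(1 - 2*n*\<rho>) * SigP n G"
proof -
  let ?Z1 = "G (4*n+1)" and ?Z2 = "G (4*n+2)" and ?Z3 = "G (4*n+3)"
  have per: "qrhs n \<rho> G i / G i + qrhs n \<rho> G (n+i) / G (n+i) + qrhs n \<rho> G (2*n+i) / G (2*n+i)
      + qrhs n \<rho> G (3*n+i) / G (3*n+i) =
      2 * ?Z1 * (1 / (G i * G (n+i)) + 1 / (G (2*n+i) * G (3*n+i)))
    + 2 * ?Z2 * (1 / (G i * G (3*n+i)) + 1 / (G (n+i) * G (2*n+i)))
    + 2 * ?Z3 * (1 / (G i * G (2*n+i)) + 1 / (G (n+i) * G (3*n+i))) - 4 * \<rho> * SigP n G"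
    if i: "i \<in> {1..n}" for i
  proof -
    have "G i > 0" "G (n+i) > 0" "G (2*n+i) > 0" "G (3*n+i) > 0" using pos i by auto
    moreover have "1 \<le> i" "i \<le> n" using i by auto
    ultimately show ?thesis
      by (simp only: qrhs_X1 qrhs_X2 qrhs_X3 qrhs_X4) (simp add: field_simps)
  qed
  have "(\<Sum>j=1..4*n. qrhs n \<rho> G j / G j) = (\<Sum>i=1..n.
      2 * ?Z1 * (1 / (G i * G (n+i)) + 1 / (G (2*n+i) * G (3*n+i)))
    + 2 * ?Z2 * (1 / (G i * G (3*n+i)) + 1 / (G (n+i) * G (2*n+i)))
    + 2 * ?Z3 * (1 / (G i * G (2*n+i)) + 1 / (G (n+i) * G (3*n+i))) - 4 * \<rho> * SigP n G)"
    unfolding sum_4blocks by (rule sum.cong) (use per in auto)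
  also have "\<dots> = 2 * ?Z1 * Sig1 n G + 2 * ?Z2 * Sig2 n G + 2 * ?Z3 * Sig3 n G - 4 * n * \<rho> * SigP n G"
    by (simp add: sum.distrib sum_subtractf sum_distrib_left distrib_left Sig1_def Sig2_def Sig3_def)
  also have "\<dots> = 2*(1 - 2*n*\<rho>) * SigP n G" by (simp add: SigP_def algebra_simps)
  finally show ?thesis by simp
qed

lemma key_Z:
  assumes pos: "\<forall>a\<in>{1..4*n+3}. G a > 0"
  shows "qrhs n \<rho> G (4*n+1) / G (4*n+1) + qrhs n \<rho> G (4*n+2) / G (4*n+2) + qrhs n \<rho> G (4*n+3) / G (4*n+3)
     = - (1 + 3*\<rho>) * SigP n G"
proof -
  have "G (4*n+1) > 0" "G (4*n+2) > 0" "G (4*n+3) > 0" using pos by auto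
  moreover have q1: "qrhs n \<rho> G (4*n+1) = - G (4*n+1) * G (4*n+1) * Sig1 n G - \<rho> * G (4*n+1) * SigP n G"
    using qrhs_Z[of 1 n \<rho> G] by (simp add: SigK_def)
  moreover have q2: "qrhs n \<rho> G (4*n+2) = - G (4*n+2) * G (4*n+2) * Sig2 n G - \<rho> * G (4*n+2) * SigP n G"
    using qrhs_Z[of 2 n \<rho> G] by (simp add: SigK_def)
  moreover have q3: "qrhs n \<rho> G (4*n+3) = - G (4*n+3) * G (4*n+3) * Sig3 n G - \<rho> * G (4*n+3) * SigP n G"
    using qrhs_Z[of 3 n \<rho> G] by (simp add: SigK_def)
  ultimately show ?thesis
    by (simp only: q1 q2 q3) (simp add: SigP_def field_simps)
qed



lemma sol_pos: "RB_diag_solution n \<rho> J g \<Longrightarrow> t \<in> J \<Longrightarrow> a \<in> {1..4*n+3} \<Longrightarrow> 0 < g t a"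
  unfolding RB_diag_solution_def by blast
lemma sol_der: "RB_diag_solution n \<rho> J g \<Longrightarrow> t \<in> J \<Longrightarrow> a \<in> {1..4*n+3} \<Longrightarrow>
   ((\<lambda>s. g s a) has_real_derivative qrhs n \<rho> (g t) a) (at t within J)"
  unfolding RB_diag_solution_def by blast

lemma part_a:
  assumes sol: "RB_diag_solution n \<rho> J g" and h: "1 + 3*\<rho> \<noteq> 0" and t: "t \<in> J"
  shows "((\<lambda>s. (\<Prod>j=1..4*n. g s j) *
                   (g s (4*n+1) * g s (4*n+2) * g s (4*n+3)) powr (2*(1 - 2*n*\<rho>) / (1 + 3*\<rho>)))
                 has_real_derivative 0) (at t within J)"
proof -
  define \<alpha> where "\<alpha> = 2*(1 - 2*n*\<rho>) / (1 + 3*\<rho>)"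
  define L where "L s = (\<Sum>j=1..4*n. ln (g s j)) + \<alpha> * (ln (g s (4*n+1)) + ln (g s (4*n+2)) + ln (g s (4*n+3)))" for s
  have eq: "(\<Prod>j=1..4*n. g s j) * (g s (4*n+1) * g s (4*n+2) * g s (4*n+3)) powr \<alpha> = exp (L s)"
    if s: "s \<in> J" for s
  proof -
    have p: "\<And>a. a \<in> {1..4*n+3} \<Longrightarrow> 0 < g s a" using sol_pos[OF sol s] .
    have "(\<Prod>j=1..4*n. g s j) = (\<Prod>j=1..4*n. exp (ln (g s j)))"
      by (rule prod.cong) (use p in auto)
    also have "\<dots> = exp (\<Sum>j=1..4*n. ln (g s j))" by (simp add: exp_sum)
    finally have 1: "(\<Prod>j=1..4*n. g s j) = exp (\<Sum>j=1..4*n. ln (g s j))" .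
    have z: "0 < g s (4*n+1)" "0 < g s (4*n+2)" "0 < g s (4*n+3)" using p by auto
    have 2: "(g s (4*n+1) * g s (4*n+2) * g s (4*n+3)) powr \<alpha>
       = exp (\<alpha> * (ln (g s (4*n+1)) + ln (g s (4*n+2)) + ln (g s (4*n+3))))"
      using z by (simp add: powr_def ln_mult)
    show ?thesis unfolding 1 2 L_def by (simp add: exp_add)
  qed
  have p: "\<And>a. a \<in> {1..4*n+3} \<Longrightarrow> 0 < g t a" using sol_pos[OF sol t] .
  have d: "\<And>a. a \<in> {1..4*n+3} \<Longrightarrow> ((\<lambda>s. g s a) has_real_derivative qrhs n \<rho> (g t) a) (at t within J)"
    using sol_der[OF sol t] .
  have dln: "((\<lambda>s. ln (g s a)) has_real_derivative qrhs n \<rho> (g t) a / g t a) (at t within J)"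
    if a: "a \<in> {1..4*n+3}" for a
    using d[OF a] p[OF a] by (auto intro!: derivative_eq_intros simp: field_simps)
  have dL: "(L has_real_derivative
     (\<Sum>j=1..4*n. qrhs n \<rho> (g t) j / g t j) + \<alpha> * (qrhs n \<rho> (g t) (4*n+1) / g t (4*n+1)
        + qrhs n \<rho> (g t) (4*n+2) / g t (4*n+2) + qrhs n \<rho> (g t) (4*n+3) / g t (4*n+3))) (at t within J)"
    unfolding L_def
    by (intro DERIV_add DERIV_sum DERIV_cmult dln) auto
  have "(\<Sum>j=1..4*n. qrhs n \<rho> (g t) j / g t j) + \<alpha> * (qrhs n \<rho> (g t) (4*n+1) / g t (4*n+1)
        + qrhs n \<rho> (g t) (4*n+2) / g t (4*n+2) + qrhs n \<rho> (g t) (4*n+3) / g t (4*n+3)) = 0"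
  proof -
    have kx: "(\<Sum>j=1..4*n. qrhs n \<rho> (g t) j / g t j) = 2*(1 - 2*n*\<rho>) * SigP n (g t)"
      using key_X[of n "g t" \<rho>] p by simp
    have kz: "qrhs n \<rho> (g t) (4*n+1) / g t (4*n+1) + qrhs n \<rho> (g t) (4*n+2) / g t (4*n+2)
       + qrhs n \<rho> (g t) (4*n+3) / g t (4*n+3) = - (1 + 3*\<rho>) * SigP n (g t)"
      using key_Z[of n "g t" \<rho>] p by simp
    show ?thesis by (simp only: kx kz) (use h in \<open>simp add: \<alpha>_def field_simps\<close>)
  qed
  with dL have dL0: "(L has_real_derivative 0) (at t within J)" by simp
  have "((\<lambda>s. exp (L s)) has_real_derivative exp (L t) * 0) (at t within J)"
    by (rule DERIV_chain2[OF DERIV_exp dL0])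
  then have "((\<lambda>s. exp (L s)) has_real_derivative 0) (at t within J)" by simp
  then show ?thesis
    by (rule has_field_derivative_transform_within[where d=1]) (use t eq[unfolded \<alpha>_def] in auto)
qed



lemma Sig_nonneg:
  assumes pos: "\<forall>a\<in>{1..4*n+3}. G a > 0"
  shows "Sig1 n G \<ge> 0" "Sig2 n G \<ge> 0" "Sig3 n G \<ge> 0"
proof -
  have q: "0 \<le> 1 / (G a * G b)" if "1 \<le> a" "a \<le> 4*n+3" "1 \<le> b" "b \<le> 4*n+3" for a b
    using pos that by (simp add: less_imp_le)
  show "Sig1 n G \<ge> 0" "Sig2 n G \<ge> 0" "Sig3 n G \<ge> 0"
    unfolding Sig1_def Sig2_def Sig3_def
    by (intro sum_nonneg add_nonneg_nonneg q; simp)+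
qed

lemma SigP_nonneg:
  assumes pos: "\<forall>a\<in>{1..4*n+3}. G a > 0"
  shows "SigP n G \<ge> 0"
proof -
  have "G (4*n+1) > 0" "G (4*n+2) > 0" "G (4*n+3) > 0" using pos by auto
  then show ?thesis using Sig_nonneg[OF pos] unfolding SigP_def
    by (intro add_nonneg_nonneg mult_nonneg_nonneg) auto
qed

lemma qrhs_X_nonneg:
  assumes pos: "\<forall>a\<in>{1..4*n+3}. G a > 0" and r: "\<rho> \<le> 0" and j: "j \<in> {1..4*n}"
  shows "qrhs n \<rho> G j \<ge> 0"
proof -
  have S: "SigP n G \<ge> 0" by (rule SigP_nonneg[OF pos])
  have P: "\<And>a. 1 \<le> a \<Longrightarrow> a \<le> 4*n+3 \<Longrightarrow> G a > 0" using pos by auto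
  have m: "- \<rho> * x * SigP n G \<ge> 0" if "x > 0" for x
    using r S that by (intro mult_nonneg_nonneg) auto
  have "0 \<le> G a / G b" if "1 \<le> a" "a \<le> 4*n+3" "1 \<le> b" "b \<le> 4*n+3" for a b
    using P[OF that(1,2)] P[OF that(3,4)] by simp
  note fr = this
  have X: "0 \<le> G a / G b + G c / G d + G e / G f - \<rho> * G x * SigP n G"
    if "a \<in> {1..4*n+3}" "b \<in> {1..4*n+3}" "c \<in> {1..4*n+3}" "d \<in> {1..4*n+3}"
       "e \<in> {1..4*n+3}" "f \<in> {1..4*n+3}" "x \<in> {1..4*n+3}" for a b c d e f x
  proof -
    have "0 \<le> G a / G b" "0 \<le> G c / G d" "0 \<le> G e / G f" using fr that by auto
    moreover have "- \<rho> * G x * SigP n G \<ge> 0" using m P that by auto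
    ultimately show ?thesis by linarith
  qed
  consider (A) "1 \<le> j \<and> j \<le> n" | (B) "\<exists>i. 1 \<le> i \<and> i \<le> n \<and> j = n + i"
    | (C) "\<exists>i. 1 \<le> i \<and> i \<le> n \<and> j = 2*n + i" | (D) "\<exists>i. 1 \<le> i \<and> i \<le> n \<and> j = 3*n + i"
  proof -
    have "j \<le> n \<or> (n < j \<and> j \<le> 2*n) \<or> (2*n < j \<and> j \<le> 3*n) \<or> (3*n < j \<and> j \<le> 4*n)"
      using j by auto
    then show ?thesis
    proof (elim disjE)
      assume "j \<le> n" then show ?thesis using j that(1) by auto
    next
      assume "n < j \<and> j \<le> 2*n" then show ?thesis by (intro that(2)[OF exI[of _ "j - n"]]) auto
    next
      assume "2*n < j \<and> j \<le> 3*n" then show ?thesis by (intro that(3)[OF exI[of _ "j - 2*n"]]) auto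
    next
      assume "3*n < j \<and> j \<le> 4*n" then show ?thesis by (intro that(4)[OF exI[of _ "j - 3*n"]]) auto
    qed
  qed
  then show ?thesis
  proof cases
    case A then show ?thesis using qrhs_X1[of j n \<rho> G] by (simp only:) (rule X; auto)
  next
    case B then obtain i where i: "1 \<le> i" "i \<le> n" "j = n + i" by blast
    then show ?thesis using qrhs_X2[OF i(1,2), of \<rho> G] by (simp only:) (rule X; auto)
  next
    case C then obtain i where i: "1 \<le> i" "i \<le> n" "j = 2*n + i" by blast
    then show ?thesis using qrhs_X3[OF i(1,2), of \<rho> G] by (simp only:) (rule X; auto)
  next
    case D then obtain i where i: "1 \<le> i" "i \<le> n" "j = 3*n + i" by blast
    then show ?thesis using qrhs_X4[OF i(1,2), of \<rho> G] by (simp only:) (rule X; auto)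
  qed
qed



lemma inv_prod_le:
  fixes ga gb ha hb :: real
  assumes "0 < ga" "ga \<le> ha" "0 < gb" "gb \<le> hb"
  shows "1/(ha*hb) \<le> 1/(ga*gb)"
  using assms by (intro divide_left_mono mult_mono mult_pos_pos) auto

lemma Sig_anti:
  assumes pos: "\<forall>a\<in>{1..4*n}. G a > 0" and le: "\<forall>a\<in>{1..4*n}. G a \<le> H a"
  shows "SigK n H k \<le> SigK n G k"
proof -
  have q: "1/(H a * H b) \<le> 1/(G a * G b)" if "a \<in> {1..4*n}" "b \<in> {1..4*n}" for a b
    using pos le that by (intro inv_prod_le) auto
  have "Sig1 n H \<le> Sig1 n G" "Sig2 n H \<le> Sig2 n G" "Sig3 n H \<le> Sig3 n G"
    unfolding Sig1_def Sig2_def Sig3_def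
    by (intro sum_mono add_mono q; simp)+
  then show ?thesis unfolding SigK_def by auto
qed

lemma x_mono:
  assumes sol: "RB_diag_solution n \<rho> J g" and r: "\<rho> \<le> 0" and J: "{0..} \<subseteq> J"
    and j: "j \<in> {1..4*n}" and s: "0 \<le> s"
  shows "g 0 j \<le> g s j"
proof -
  have "- g s j \<le> - g 0 j"
  proof (rule dec_lemma[of 0 s "\<lambda>r. - g r j" "\<lambda>r. - qrhs n \<rho> (g r) j"])
    fix x assume x: "x \<in> {0..s}"
    then have xJ: "x \<in> J" using J by auto
    have "{0..s} \<subseteq> J" using J by auto
    then show "((\<lambda>r. - g r j) has_real_derivative - qrhs n \<rho> (g x) j) (at x within {0..s})"
      using j by (intro DERIV_minus has_field_derivative_subset[OF sol_der[OF sol xJ]]) auto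
    show "- qrhs n \<rho> (g x) j \<le> 0"
      using qrhs_X_nonneg[of n "g x" \<rho> j] sol_pos[OF sol xJ] r j by auto
  qed (use s in auto)
  then show ?thesis by simp
qed

lemma part_b:
  assumes sol: "RB_diag_solution n \<rho> J g" and r: "\<rho> < 0" and J: "{0..} \<subseteq> J"
    and k: "k \<in> {4*n+1..4*n+3}"
  shows "filterlim (\<lambda>t. integral {0..t} (\<lambda>r. g r k)) at_top at_top"
proof -
  define kk where "kk = k - 4*n"
  have kk: "1 \<le> kk" "kk \<le> 3" "k = 4*n + kk" using k by (auto simp: kk_def)
  have J0: "0 \<in> J" using J by auto
  have pos: "\<And>t a. t \<in> J \<Longrightarrow> a \<in> {1..4*n+3} \<Longrightarrow> 0 < g t a" using sol_pos[OF sol] by blast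
  define C where "C = SigK n (g 0) kk"
  have C0: "C \<ge> 0" using Sig_nonneg[of n "g 0"] pos[OF J0] unfolding C_def SigK_def by auto
  define B where "B = C + 1"
  have B0: "B > 0" using C0 by (simp add: B_def)
  define w0 where "w0 = inverse (g 0 k)"
  have w00: "w0 > 0" using pos[OF J0, of k] k by (simp add: w0_def)
  have lb: "1/(w0 + B*t) \<le> g t k" if t: "0 \<le> t" for t
  proof -
    have sub: "{0..t} \<subseteq> J" using J by auto
    have "inverse (g t k) - B*t \<le> inverse (g 0 k) - B*0"
    proof (rule dec_lemma[of 0 t "\<lambda>r. inverse (g r k) - B*r"
          "\<lambda>r. - (inverse (g r k) * qrhs n \<rho> (g r) k * inverse (g r k)) - B"])
      fix x assume x: "x \<in> {0..t}"
      then have xJ: "x \<in> J" using J by auto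
      have gx: "g x k \<noteq> 0" using pos[OF xJ, of k] k by auto
      have d: "((\<lambda>r. g r k) has_real_derivative qrhs n \<rho> (g x) k) (at x within {0..t})"
        using k by (intro has_field_derivative_subset[OF sol_der[OF sol xJ] sub]) auto
      show "((\<lambda>r. inverse (g r k) - B*r) has_real_derivative
          - (inverse (g x k) * qrhs n \<rho> (g x) k * inverse (g x k)) - B) (at x within {0..t})"
        using DERIV_diff[OF DERIV_inverse_fun[OF d gx] DERIV_cmult[OF DERIV_ident, of B]] by (simp add: mult_ac)
      have px: "\<forall>a\<in>{1..4*n+3}. g x a > 0" using pos[OF xJ] by auto
      have G: "g x k > 0" using px k by auto
      have q: "qrhs n \<rho> (g x) k = - g x k * g x k * SigK n (g x) kk - \<rho> * g x k * SigP n (g x)"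
        using qrhs_Z[OF kk(1,2), of n \<rho> "g x"] kk(3) by simp
      have "inverse (g x k) * qrhs n \<rho> (g x) k * inverse (g x k)
          = - SigK n (g x) kk - \<rho> * SigP n (g x) / g x k"
        unfolding q using G by (simp add: field_simps)
      moreover have "\<rho> * SigP n (g x) / g x k \<le> 0"
        using SigP_nonneg[OF px] r G by (simp add: divide_nonpos_pos mult_nonpos_nonneg)
      moreover have "SigK n (g x) kk \<le> C" unfolding C_def
        by (rule Sig_anti) (use pos[OF J0] x_mono[OF sol _ J] r x in auto)
      ultimately show "- (inverse (g x k) * qrhs n \<rho> (g x) k * inverse (g x k)) - B \<le> 0"
        unfolding B_def by linarith
    qed (use t in auto)
    then have "inverse (g t k) \<le> w0 + B*t" by (simp add: w0_def)
    moreover have "g t k > 0" using pos[of t k] sub t k by auto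
    ultimately show ?thesis
      by (metis inverse_eq_divide inverse_inverse_eq le_imp_inverse_le positive_imp_inverse_positive)
  qed
  have ib: "(ln (w0 + B*t) - ln w0)/B \<le> integral {0..t} (\<lambda>r. g r k)" if t: "0 \<le> t" for t
  proof -
    have sub: "{0..t} \<subseteq> J" using J by auto
    have FTC: "((\<lambda>r. 1/(w0 + B*r)) has_integral (ln (w0 + B*t)/B - ln (w0 + B*0)/B)) {0..t}"
    proof (rule fundamental_theorem_of_calculus[OF t])
      fix x assume x: "x \<in> {0..t}"
      have wx: "w0 + B*x > 0" using w00 B0 x by (simp add: add_pos_nonneg)
      have "B * (B * (w0 + B*x)) > 0" using wx B0 by simp
      then have "B * (B * w0) + B * (B * (B * x)) \<noteq> 0" by (simp add: distrib_left)
      with wx show "((\<lambda>r. ln (w0 + B*r)/B) has_vector_derivative 1/(w0 + B*x)) (at x within {0..t})"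
        unfolding has_real_derivative_iff_has_vector_derivative[symmetric]
        using B0 by (auto intro!: derivative_eq_intros simp: field_simps)
    qed
    have cont: "continuous_on {0..t} (\<lambda>r. g r k)"
      by (rule DERIV_continuous_on[where D="\<lambda>x. qrhs n \<rho> (g x) k"])
         (use sub k in \<open>auto intro!: has_field_derivative_subset[OF sol_der[OF sol]]\<close>)
    have "integral {0..t} (\<lambda>r. 1/(w0 + B*r)) \<le> integral {0..t} (\<lambda>r. g r k)"
      by (rule integral_le[OF has_integral_integrable[OF FTC] integrable_continuous_interval[OF cont]])
         (use lb in auto)
    then show ?thesis using integral_unique[OF FTC] by (simp add: diff_divide_distrib)
  qed
  have lim: "filterlim (\<lambda>t. (ln (w0 + B*t) - ln w0)/B) at_top at_top"
    using w00 B0 by real_asymp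
  show ?thesis
    by (rule filterlim_at_top_mono[OF lim]) (use ib in \<open>auto intro: eventually_ge_at_top[THEN eventually_mono]\<close>)
qed



definition inbox :: "nat \<Rightarrow> real \<Rightarrow> (nat \<Rightarrow> real) \<Rightarrow> bool" where
  "inbox N m G \<longleftrightarrow> (\<forall>b\<in>{1..N}. m \<le> G b \<and> G b \<le> 1/m)"
definition dst :: "nat \<Rightarrow> (nat \<Rightarrow> real) \<Rightarrow> (nat \<Rightarrow> real) \<Rightarrow> real" where
  "dst N G H = (\<Sum>b=1..N. \<bar>G b - H b\<bar>)"
definition lipb :: "nat \<Rightarrow> real \<Rightarrow> ((nat \<Rightarrow> real) \<Rightarrow> real) \<Rightarrow> bool" where
  "lipb N m f \<longleftrightarrow> (\<exists>L. \<forall>G H. inbox N m G \<longrightarrow> inbox N m H \<longrightarrow> \<bar>f G - f H\<bar> \<le> L * dst N G H)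
     \<and> (\<exists>C. \<forall>G. inbox N m G \<longrightarrow> \<bar>f G\<bar> \<le> C)"

lemma dst_nonneg: "dst N G H \<ge> 0" unfolding dst_def by (intro sum_nonneg) auto

lemma lipb_const: "lipb N m (\<lambda>G. c)"
  unfolding lipb_def by (auto intro!: exI[of _ 0] exI[of _ "\<bar>c\<bar>"] mult_nonneg_nonneg dst_nonneg)

lemma lipb_coord:
  assumes m: "0 < m" and b: "b \<in> {1..N}"
  shows "lipb N m (\<lambda>G. G b)"
  unfolding lipb_def
proof (intro conjI exI allI impI)
  fix G H assume "inbox N m G" "inbox N m H"
  have "\<bar>G b - H b\<bar> \<le> dst N G H" unfolding dst_def
    by (rule member_le_sum[of b "{1..N}" "\<lambda>b. \<bar>G b - H b\<bar>"]) (use b in auto)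
  then show "\<bar>G b - H b\<bar> \<le> 1 * dst N G H" by simp
next
  fix G assume "inbox N m G"
  then show "\<bar>G b\<bar> \<le> 1/m" using b m unfolding inbox_def by force
qed

lemma lipb_invcoord:
  assumes m: "0 < m" and b: "b \<in> {1..N}"
  shows "lipb N m (\<lambda>G. 1 / G b)"
  unfolding lipb_def
proof (intro conjI exI allI impI)
  fix G H assume G: "inbox N m G" and H: "inbox N m H"
  have g: "m \<le> G b" and h: "m \<le> H b" using G H b unfolding inbox_def by auto
  have gp: "G b > 0" "H b > 0" using g h m by auto
  have "\<bar>1 / G b - 1 / H b\<bar> = \<bar>G b - H b\<bar> / (G b * H b)"
    using gp by (simp add: field_simps abs_div abs_mult)
  also have "\<dots> \<le> \<bar>G b - H b\<bar> / (m * m)"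
    using g h m by (intro divide_left_mono mult_mono) auto
  also have "\<bar>G b - H b\<bar> \<le> dst N G H" unfolding dst_def
    by (rule member_le_sum[of b "{1..N}" "\<lambda>b. \<bar>G b - H b\<bar>"]) (use b in auto)
  then have "\<bar>G b - H b\<bar> / (m * m) \<le> dst N G H / (m*m)" using m by (simp add: divide_right_mono)
  finally show "\<bar>1 / G b - 1 / H b\<bar> \<le> (1/(m*m)) * dst N G H" by simp
next
  fix G assume G: "inbox N m G"
  have g: "m \<le> G b" using G b unfolding inbox_def by auto
  then show "\<bar>1 / G b\<bar> \<le> 1/m" using m by (simp add: frac_le)
qed

lemma lipb_add:
  assumes "lipb N m f" "lipb N m g"
  shows "lipb N m (\<lambda>G. f G + g G)"
proof -
  obtain L1 C1 where 1: "\<And>G H. inbox N m G \<Longrightarrow> inbox N m H \<Longrightarrow> \<bar>f G - f H\<bar> \<le> L1 * dst N G H"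
    "\<And>G. inbox N m G \<Longrightarrow> \<bar>f G\<bar> \<le> C1" using assms(1) unfolding lipb_def by blast
  obtain L2 C2 where 2: "\<And>G H. inbox N m G \<Longrightarrow> inbox N m H \<Longrightarrow> \<bar>g G - g H\<bar> \<le> L2 * dst N G H"
    "\<And>G. inbox N m G \<Longrightarrow> \<bar>g G\<bar> \<le> C2" using assms(2) unfolding lipb_def by blast
  show ?thesis unfolding lipb_def
  proof (intro conjI exI allI impI)
    fix G H assume G: "inbox N m G" and H: "inbox N m H"
    have "\<bar>f G + g G - (f H + g H)\<bar> \<le> \<bar>f G - f H\<bar> + \<bar>g G - g H\<bar>" by linarith
    also have "\<dots> \<le> L1 * dst N G H + L2 * dst N G H" using 1(1)[OF G H] 2(1)[OF G H] by linarith
    finally show "\<bar>f G + g G - (f H + g H)\<bar> \<le> (L1 + L2) * dst N G H" by (simp add: distrib_right)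
  next
    fix G assume G: "inbox N m G"
    show "\<bar>f G + g G\<bar> \<le> C1 + C2" using 1(2)[OF G] 2(2)[OF G] by linarith
  qed
qed

lemma lipb_minus:
  assumes "lipb N m f"
  shows "lipb N m (\<lambda>G. - f G)"
  using assms unfolding lipb_def by (metis abs_minus_cancel abs_minus_commute minus_diff_minus)

lemma lipb_diff:
  assumes "lipb N m f" "lipb N m g"
  shows "lipb N m (\<lambda>G. f G - g G)"
  using lipb_add[OF assms(1) lipb_minus[OF assms(2)]] by simp

lemma lipb_mult:
  assumes "lipb N m f" "lipb N m g"
  shows "lipb N m (\<lambda>G. f G * g G)"
proof -
  obtain L1 C1 where 1: "\<And>G H. inbox N m G \<Longrightarrow> inbox N m H \<Longrightarrow> \<bar>f G - f H\<bar> \<le> L1 * dst N G H"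
    "\<And>G. inbox N m G \<Longrightarrow> \<bar>f G\<bar> \<le> C1" using assms(1) unfolding lipb_def by blast
  obtain L2 C2 where 2: "\<And>G H. inbox N m G \<Longrightarrow> inbox N m H \<Longrightarrow> \<bar>g G - g H\<bar> \<le> L2 * dst N G H"
    "\<And>G. inbox N m G \<Longrightarrow> \<bar>g G\<bar> \<le> C2" using assms(2) unfolding lipb_def by blast
  show ?thesis unfolding lipb_def
  proof (intro conjI exI allI impI)
    fix G H assume G: "inbox N m G" and H: "inbox N m H"
    have "f G * g G - f H * g H = f G * (g G - g H) + g H * (f G - f H)" by (simp add: algebra_simps)
    then have "\<bar>f G * g G - f H * g H\<bar> \<le> \<bar>f G\<bar> * \<bar>g G - g H\<bar> + \<bar>g H\<bar> * \<bar>f G - f H\<bar>"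
      by (metis abs_mult abs_triangle_ineq)
    also have "\<bar>f G\<bar> * \<bar>g G - g H\<bar> \<le> C1 * (L2 * dst N G H)"
      using 1(2)[OF G] 2(1)[OF G H] by (intro mult_mono) auto
    also have "\<bar>g H\<bar> * \<bar>f G - f H\<bar> \<le> C2 * (L1 * dst N G H)"
      using 2(2)[OF H] 1(1)[OF G H] by (intro mult_mono) auto
    finally show "\<bar>f G * g G - f H * g H\<bar> \<le> (C1 * L2 + C2 * L1) * dst N G H"
      by (simp add: algebra_simps)
  next
    fix G assume G: "inbox N m G"
    show "\<bar>f G * g G\<bar> \<le> C1 * C2" using 1(2)[OF G] 2(2)[OF G]
      by (simp add: abs_mult mult_mono)
  qed
qed

lemma lipb_sum:
  assumes "finite I" "\<And>i. i \<in> I \<Longrightarrow> lipb N m (f i)"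
  shows "lipb N m (\<lambda>G. \<Sum>i\<in>I. f i G)"
  using assms
proof (induction I rule: finite_induct)
  case empty then show ?case by (simp add: lipb_const)
next
  case (insert x F)
  then show ?case by (simp add: lipb_add)
qed

lemma lipb_div:
  assumes "lipb N m f" "0 < m" "b \<in> {1..N}"
  shows "lipb N m (\<lambda>G. f G / G b)"
  using lipb_mult[OF assms(1) lipb_invcoord[OF assms(2,3)]] by simp

lemma lipb_invprod:
  assumes "0 < m" "a \<in> {1..N}" "b \<in> {1..N}"
  shows "lipb N m (\<lambda>G. 1 / (G a * G b))"
  using lipb_mult[OF lipb_invcoord[OF assms(1,2)] lipb_invcoord[OF assms(1,3)]] by simp



lemma X_cases:
  assumes j: "j \<in> {1..4*n::nat}"
  obtains (A) i where "1 \<le> i" "i \<le> n" "j = i"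
    | (B) i where "1 \<le> i" "i \<le> n" "j = n + i"
    | (C) i where "1 \<le> i" "i \<le> n" "j = 2*n + i"
    | (D) i where "1 \<le> i" "i \<le> n" "j = 3*n + i"
proof -
  have "j \<le> n \<or> (n < j \<and> j \<le> 2*n) \<or> (2*n < j \<and> j \<le> 3*n) \<or> (3*n < j \<and> j \<le> 4*n)"
    using j by auto
  then show ?thesis
  proof (elim disjE)
    assume "j \<le> n" then show ?thesis using j A by auto
  next
    assume "n < j \<and> j \<le> 2*n" then show ?thesis using B[of "j - n"] by auto
  next
    assume "2*n < j \<and> j \<le> 3*n" then show ?thesis using C[of "j - 2*n"] by auto
  next
    assume "3*n < j \<and> j \<le> 4*n" then show ?thesis using D[of "j - 3*n"] by auto
  qed
qed

lemma lipb_Sigs: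
  assumes m: "0 < m"
  shows "lipb (4*n+3) m (\<lambda>G. Sig1 n G)" "lipb (4*n+3) m (\<lambda>G. Sig2 n G)" "lipb (4*n+3) m (\<lambda>G. Sig3 n G)"
  unfolding Sig1_def Sig2_def Sig3_def
  by (intro lipb_sum lipb_add lipb_invprod m; simp)+

lemma lipb_SigP:
  assumes m: "0 < m"
  shows "lipb (4*n+3) m (\<lambda>G. SigP n G)"
  unfolding SigP_def
  by (intro lipb_add lipb_mult lipb_coord lipb_Sigs m; simp)

lemma lipb_qrhs:
  assumes m: "0 < m" and a: "a \<in> {1..4*n+3}"
  shows "lipb (4*n+3) m (\<lambda>G. qrhs n \<rho> G a)"
proof (cases "a \<le> 4*n")
  case True
  then have a': "a \<in> {1..4*n}" using a by auto
  note intros = lipb_diff lipb_add lipb_div lipb_mult lipb_coord lipb_const lipb_SigP m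
  show ?thesis
  using a' proof (cases rule: X_cases)
    case (A i)
    then show ?thesis by (simp only: qrhs_X1) (intro intros; simp)
  next
    case (B i)
    then show ?thesis by (simp only: qrhs_X2) (intro intros; simp)
  next
    case (C i)
    then show ?thesis by (simp only: qrhs_X3) (intro intros; simp)
  next
    case (D i)
    then show ?thesis by (simp only: qrhs_X4) (intro intros; simp)
  qed
next
  case False
  define kk where "kk = a - 4*n"
  have kk: "1 \<le> kk" "kk \<le> 3" "a = 4*n + kk" using a False by (auto simp: kk_def)
  have e: "(\<lambda>G. qrhs n \<rho> G a) = (\<lambda>G. - G (4*n+kk) * G (4*n+kk) * SigK n G kk - \<rho> * G (4*n+kk) * SigP n G)"
    using qrhs_Z[OF kk(1,2)] kk(3) by simp
  have sk: "lipb (4*n+3) m (\<lambda>G. SigK n G kk)"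
    using lipb_Sigs[OF m, of n] unfolding SigK_def by (cases "kk = 1"; cases "kk = 2") auto
  show ?thesis unfolding e
    by (intro lipb_diff lipb_mult lipb_minus lipb_coord lipb_const lipb_SigP m sk; use kk in simp)
qed



lemma gronwall0:
  fixes u du :: "real \<Rightarrow> real"
  assumes d: "\<And>s. s \<in> {min 0 t..max 0 t} \<Longrightarrow> (u has_real_derivative du s) (at s within {min 0 t..max 0 t})"
    and b: "\<And>s. s \<in> {min 0 t..max 0 t} \<Longrightarrow> \<bar>du s\<bar> \<le> K * u s"
    and nn: "\<And>s. s \<in> {min 0 t..max 0 t} \<Longrightarrow> 0 \<le> u s"
    and u0: "u 0 = 0"
  shows "u t = 0"
proof (cases "0 \<le> t")
  case True
  then have S: "{min 0 t..max 0 t} = {0..t}" by auto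
  have "u t * exp (-K * t) \<le> u 0 * exp (-K * 0)"
  proof (rule dec_lemma[of 0 t "\<lambda>s. u s * exp (-K * s)" "\<lambda>s. (du s - K * u s) * exp (-K * s)"])
    fix x assume x: "x \<in> {0..t}"
    have dx: "(u has_real_derivative du x) (at x within {0..t})" using d[of x] x S by auto
    show "((\<lambda>s. u s * exp (-K * s)) has_real_derivative (du x - K * u x) * exp (-K * x)) (at x within {0..t})"
      by (rule derivative_eq_intros dx refl | simp add: algebra_simps)+
    have "du x - K * u x \<le> 0" using b[of x] x S by auto
    then show "(du x - K * u x) * exp (-K * x) \<le> 0" by (simp add: mult_nonpos_nonneg)
  qed (use True in auto)
  then have "u t \<le> 0" using u0 by (simp add: mult_le_0_iff)
  with nn[of t] True show ?thesis by auto
next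
  case False
  then have S: "{min 0 t..max 0 t} = {t..0}" by auto
  have "- (u 0 * exp (K * 0)) \<le> - (u t * exp (K * t))"
  proof (rule dec_lemma[of t 0 "\<lambda>s. - (u s * exp (K * s))" "\<lambda>s. - ((du s + K * u s) * exp (K * s))"])
    fix x assume x: "x \<in> {t..0}"
    have dx: "(u has_real_derivative du x) (at x within {t..0})" using d[of x] x S by auto
    show "((\<lambda>s. - (u s * exp (K * s))) has_real_derivative - ((du x + K * u x) * exp (K * x))) (at x within {t..0})"
      by (rule derivative_eq_intros dx refl | simp add: algebra_simps)+
    have "du x + K * u x \<ge> 0" using b[of x] x S by auto
    then show "- ((du x + K * u x) * exp (K * x)) \<le> 0" by simp
  qed (use False in auto)
  then have "u t \<le> 0" using u0 by (simp add: mult_le_0_iff)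
  with nn[of t] False show ?thesis by auto
qed

lemma cont_bounds:
  fixes f :: "real \<Rightarrow> real"
  assumes "compact S" "S \<noteq> {}" "continuous_on S f" "\<And>s. s \<in> S \<Longrightarrow> f s > 0"
  shows "\<exists>m>0. \<forall>s\<in>S. m \<le> f s \<and> f s \<le> 1/m"
proof -
  obtain x1 where x1: "x1 \<in> S" "\<And>y. y \<in> S \<Longrightarrow> f x1 \<le> f y"
    using continuous_attains_inf[OF assms(1-3)] by blast
  obtain x2 where x2: "x2 \<in> S" "\<And>y. y \<in> S \<Longrightarrow> f y \<le> f x2"
    using continuous_attains_sup[OF assms(1-3)] by blast
  have p1: "f x1 > 0" and p2: "f x2 > 0" using assms(4) x1 x2 by auto
  define m where "m = min (f x1) (1 / f x2)"
  have m0: "m > 0" using p1 p2 by (simp add: m_def)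
  have "m \<le> f s \<and> f s \<le> 1/m" if s: "s \<in> S" for s
  proof
    show "m \<le> f s" using x1(2)[OF s] by (simp add: m_def)
    have "m \<le> 1 / f x2" by (simp add: m_def)
    then have "f x2 \<le> 1 / m" using m0 p2 by (simp add: field_simps)
    then show "f s \<le> 1/m" using x2(2)[OF s] p2 by simp
  qed
  with m0 show ?thesis by blast
qed

lemma bound_mono: "0 < m' \<Longrightarrow> m' \<le> m \<Longrightarrow> m \<le> v \<and> v \<le> 1/m \<Longrightarrow> m' \<le> v \<and> v \<le> 1/(m'::real)"
  by (smt (verit) frac_le)

lemma fin_bounds:
  fixes f :: "'a \<Rightarrow> 'b \<Rightarrow> real"
  assumes "finite A" "\<And>a. a \<in> A \<Longrightarrow> \<exists>m>0. \<forall>s\<in>S. m \<le> f a s \<and> f a s \<le> 1/m"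
  shows "\<exists>m>0. \<forall>a\<in>A. \<forall>s\<in>S. m \<le> f a s \<and> f a s \<le> 1/m"
  using assms
proof (induction A rule: finite_induct)
  case empty then show ?case by (auto intro: exI[of _ 1])
next
  case (insert x F)
  obtain m1 where m1: "m1 > 0" "\<forall>a\<in>F. \<forall>s\<in>S. m1 \<le> f a s \<and> f a s \<le> 1/m1" using insert by auto
  have "\<exists>m>0. \<forall>s\<in>S. m \<le> f x s \<and> f x s \<le> 1/m" using insert.prems by auto
  then obtain m2 where m2: "m2 > 0" "\<forall>s\<in>S. m2 \<le> f x s \<and> f x s \<le> 1/m2" by auto
  have "min m1 m2 > 0" using m1 m2 by auto
  moreover have "\<forall>a\<in>insert x F. \<forall>s\<in>S. min m1 m2 \<le> f a s \<and> f a s \<le> 1/min m1 m2"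
    using m1 m2 bound_mono[OF \<open>min m1 m2 > 0\<close>] by (metis insert_iff min.cobounded1 min.cobounded2)
  ultimately show ?case by blast
qed



lemma Sig_sym:
  fixes G :: "nat \<Rightarrow> real" and x :: real
  assumes X: "\<And>j. j \<in> {1..4*n} \<Longrightarrow> G j = x"
  shows "Sig1 n G = 2 * real n / (x*x)" "Sig2 n G = 2 * real n / (x*x)" "Sig3 n G = 2 * real n / (x*x)"
proof -
  have e: "G i = x \<and> G (n+i) = x \<and> G (2*n+i) = x \<and> G (3*n+i) = x" if "i \<in> {1..n}" for i
    using X[of i] X[of "n+i"] X[of "2*n+i"] X[of "3*n+i"] that by auto
  have "Sig1 n G = (\<Sum>i=1..n. 2 / (x*x))" unfolding Sig1_def by (rule sum.cong) (auto simp: e)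
  then show "Sig1 n G = 2 * real n / (x*x)" by simp
  have "Sig2 n G = (\<Sum>i=1..n. 2 / (x*x))" unfolding Sig2_def by (rule sum.cong) (auto simp: e)
  then show "Sig2 n G = 2 * real n / (x*x)" by simp
  have "Sig3 n G = (\<Sum>i=1..n. 2 / (x*x))" unfolding Sig3_def by (rule sum.cong) (auto simp: e)
  then show "Sig3 n G = 2 * real n / (x*x)" by simp
qed

lemma qrhs_sym:
  fixes G :: "nat \<Rightarrow> real" and x z \<rho> :: real
  assumes X: "\<And>j. j \<in> {1..4*n} \<Longrightarrow> G j = x" and Z: "\<And>k. k \<in> {1..3} \<Longrightarrow> G (4*n+k) = z"
    and x: "x > 0"
  shows "a \<in> {1..4*n} \<Longrightarrow> qrhs n \<rho> G a = (3 - 6*real n*\<rho>) * z / x"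
    and "a \<in> {4*n+1..4*n+3} \<Longrightarrow> qrhs n \<rho> G a = - (2*real n + 6*real n*\<rho>) * z * z / (x*x)"
proof -
  have Zs: "G (4*n+1) = z" "G (4*n+2) = z" "G (4*n+3) = z" using Z[of 1] Z[of 2] Z[of 3] by auto
  have S: "SigP n G = 6 * real n * z / (x*x)"
    using Sig_sym[of n G x, OF X] Zs by (simp add: SigP_def field_simps)
  show "qrhs n \<rho> G a = (3 - 6*real n*\<rho>) * z / x" if a: "a \<in> {1..4*n}"
    using a
  proof (cases rule: X_cases)
    case (A i)
    then have "G i = x" "G (n+i) = x" "G (2*n+i) = x" "G (3*n+i) = x" using X by auto
    then show ?thesis using A x by (simp only: qrhs_X1 Zs S) (simp add: field_simps)
  next
    case (B i)
    then have "G i = x" "G (n+i) = x" "G (2*n+i) = x" "G (3*n+i) = x" using X by auto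
    then show ?thesis using B x by (simp only: qrhs_X2 Zs S) (simp add: field_simps)
  next
    case (C i)
    then have "G i = x" "G (n+i) = x" "G (2*n+i) = x" "G (3*n+i) = x" using X by auto
    then show ?thesis using C x by (simp only: qrhs_X3 Zs S) (simp add: field_simps)
  next
    case (D i)
    then have "G i = x" "G (n+i) = x" "G (2*n+i) = x" "G (3*n+i) = x" using X by auto
    then show ?thesis using D x by (simp only: qrhs_X4 Zs S) (simp add: field_simps)
  qed
  show "qrhs n \<rho> G a = - (2*real n + 6*real n*\<rho>) * z * z / (x*x)" if a: "a \<in> {4*n+1..4*n+3}"
  proof -
    define kk where "kk = a - 4*n"
    have kk: "1 \<le> kk" "kk \<le> 3" "a = 4*n + kk" using a by (auto simp: kk_def)
    have "SigK n G kk = 2 * real n / (x*x)" using Sig_sym[of n G x, OF X] unfolding SigK_def by simp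
    moreover have "G a = z" using Z kk by auto
    ultimately show ?thesis using qrhs_Z[OF kk(1,2), of n \<rho> G] kk(3) S x
      by (simp add: field_simps)
  qed
qed



lemma h_deriv:
  fixes x0 z0 c p q s A B :: real
  assumes x0: "x0 > 0" and z0: "z0 > 0" and w: "1 + c * s > 0"
    and pc: "p * c = A * z0 / x0^2" and qc: "q * c = B * z0 / x0^2" and qp: "q = 2*p - 1"
  shows "((\<lambda>r. x0 * (1 + c * r) powr p) has_real_derivative
           A * (z0 * (1 + c * s) powr q) / (x0 * (1 + c * s) powr p)) (at s)"
    and "((\<lambda>r. z0 * (1 + c * r) powr q) has_real_derivative
           B * (z0 * (1 + c * s) powr q) * (z0 * (1 + c * s) powr q)
             / ((x0 * (1 + c * s) powr p) * (x0 * (1 + c * s) powr p))) (at s)"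
proof -
  define W where "W = 1 + c * s"
  have W0: "W > 0" using w by (simp add: W_def)
  define y where "y = W powr p"
  have y0: "y > 0" using W0 by (simp add: y_def)
  have wq: "W powr q = y * y / W"
  proof -
    have "q = (p + p) - 1" using qp by simp
    then have "W powr q = W powr (p + p) / W powr 1" by (simp only: powr_diff)
    also have "\<dots> = W powr p * W powr p / W" using W0 powr_one[of W] by (simp only: powr_add)
    finally show ?thesis by (simp add: y_def)
  qed
  have dW: "((\<lambda>r. 1 + c * r) has_real_derivative c) (at s)"
    using DERIV_add[OF DERIV_const DERIV_cmult[OF DERIV_ident, of c]] by simp
  have d1: "((\<lambda>r. x0 * (1 + c * r) powr p) has_real_derivative
      x0 * ((1 + c * s) powr p * (0 * ln (1 + c * s) + c * p / (1 + c * s)))) (at s)"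
    by (rule DERIV_cmult, rule DERIV_powr[OF dW w DERIV_const])
  show "((\<lambda>r. x0 * (1 + c * r) powr p) has_real_derivative
           A * (z0 * (1 + c * s) powr q) / (x0 * (1 + c * s) powr p)) (at s)"
  proof (rule DERIV_cong[OF d1])
    have cp: "c * p = A * z0 / x0^2" using pc by (simp add: mult.commute)
    have "x0 * (y * (c * p / W)) = A * (z0 * (y * y / W)) / (x0 * y)"
      unfolding cp using x0 y0 W0 by (simp add: field_simps power2_eq_square)
    then show "x0 * ((1 + c * s) powr p * (0 * ln (1 + c * s) + c * p / (1 + c * s)))
        = A * (z0 * (1 + c * s) powr q) / (x0 * (1 + c * s) powr p)"
      using wq by (simp add: W_def y_def)
  qed
  have d2: "((\<lambda>r. z0 * (1 + c * r) powr q) has_real_derivative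
      z0 * ((1 + c * s) powr q * (0 * ln (1 + c * s) + c * q / (1 + c * s)))) (at s)"
    by (rule DERIV_cmult, rule DERIV_powr[OF dW w DERIV_const])
  show "((\<lambda>r. z0 * (1 + c * r) powr q) has_real_derivative
           B * (z0 * (1 + c * s) powr q) * (z0 * (1 + c * s) powr q)
             / ((x0 * (1 + c * s) powr p) * (x0 * (1 + c * s) powr p))) (at s)"
  proof (rule DERIV_cong[OF d2])
    have cq: "c * q = B * z0 / x0^2" using qc by (simp add: mult.commute)
    have "z0 * ((y * y / W) * (c * q / W)) = B * (z0 * (y * y / W)) * (z0 * (y * y / W)) / ((x0 * y) * (x0 * y))"
      unfolding cq using x0 y0 W0 by (simp add: field_simps power2_eq_square)
    then show "z0 * ((1 + c * s) powr q * (0 * ln (1 + c * s) + c * q / (1 + c * s)))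
        = B * (z0 * (1 + c * s) powr q) * (z0 * (1 + c * s) powr q)
             / ((x0 * (1 + c * s) powr p) * (x0 * (1 + c * s) powr p))"
      using wq by (simp add: W_def y_def)
  qed
qed



lemma uniq:
  fixes g h :: "real \<Rightarrow> nat \<Rightarrow> real" and F :: "(nat \<Rightarrow> real) \<Rightarrow> nat \<Rightarrow> real"
  assumes m: "0 < m"
    and box: "\<And>s. s \<in> {min 0 t0..max 0 t0} \<Longrightarrow> inbox N m (g s) \<and> inbox N m (h s)"
    and lip: "\<And>a. a \<in> {1..N} \<Longrightarrow> lipb N m (\<lambda>G. F G a)"
    and dg: "\<And>s a. s \<in> {min 0 t0..max 0 t0} \<Longrightarrow> a \<in> {1..N} \<Longrightarrow>
              ((\<lambda>r. g r a) has_real_derivative F (g s) a) (at s within {min 0 t0..max 0 t0})"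
    and dh: "\<And>s a. s \<in> {min 0 t0..max 0 t0} \<Longrightarrow> a \<in> {1..N} \<Longrightarrow>
              ((\<lambda>r. h r a) has_real_derivative F (h s) a) (at s within {min 0 t0..max 0 t0})"
    and init: "\<And>a. a \<in> {1..N} \<Longrightarrow> g 0 a = h 0 a"
    and a: "a \<in> {1..N}"
  shows "g t0 a = h t0 a"
proof -
  let ?S = "{min 0 t0..max 0 t0}"
  have "\<forall>a\<in>{1..N}. \<exists>L. \<forall>G H. inbox N m G \<longrightarrow> inbox N m H \<longrightarrow> \<bar>F G a - F H a\<bar> \<le> L * dst N G H"
    using lip unfolding lipb_def by blast
  then obtain Lf where Lf: "\<And>a G H. a \<in> {1..N} \<Longrightarrow> inbox N m G \<Longrightarrow> inbox N m H \<Longrightarrow>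
      \<bar>F G a - F H a\<bar> \<le> Lf a * dst N G H"
    by metis
  define L where "L = (\<Sum>a=1..N. \<bar>Lf a\<bar>)"
  have L0: "L \<ge> 0" unfolding L_def by (intro sum_nonneg) auto
  have LfL: "\<bar>F G a - F H a\<bar> \<le> L * dst N G H" if "a \<in> {1..N}" "inbox N m G" "inbox N m H" for a G H
  proof -
    have "Lf a * dst N G H \<le> \<bar>Lf a\<bar> * dst N G H" using dst_nonneg[of N G H]
      by (intro mult_right_mono) auto
    also have "\<bar>Lf a\<bar> \<le> L" unfolding L_def
      by (rule member_le_sum[of a "{1..N}" "\<lambda>a. \<bar>Lf a\<bar>"]) (use that in auto)
    then have "\<bar>Lf a\<bar> * dst N G H \<le> L * dst N G H" using dst_nonneg[of N G H]
      by (intro mult_right_mono) auto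
    finally show ?thesis using Lf[OF that] by linarith
  qed
  define u where "u s = (\<Sum>a=1..N. (g s a - h s a) * (g s a - h s a))" for s
  define du where "du s = (\<Sum>a=1..N. 2 * (g s a - h s a) * (F (g s) a - F (h s) a))" for s
  have "u t0 = 0"
  proof (rule gronwall0[where u = u and t = t0 and du = du and K = "2 * L * N"])
    fix s assume s: "s \<in> ?S"
    have dd: "((\<lambda>r. (g r a - h r a) * (g r a - h r a)) has_real_derivative
          2 * (g s a - h s a) * (F (g s) a - F (h s) a)) (at s within ?S)" if a: "a \<in> {1..N}" for a
    proof -
      have d: "((\<lambda>r. g r a - h r a) has_real_derivative F (g s) a - F (h s) a) (at s within ?S)"
        by (rule DERIV_diff[OF dg[OF s a] dh[OF s a]])
      show ?thesis
        by (rule DERIV_cong[OF DERIV_mult[OF d d]]) (simp add: algebra_simps)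
    qed
    have "((\<lambda>r. \<Sum>a=1..N. (g r a - h r a) * (g r a - h r a)) has_real_derivative
          (\<Sum>a=1..N. 2 * (g s a - h s a) * (F (g s) a - F (h s) a))) (at s within ?S)"
      by (rule DERIV_sum[OF dd])
    then show "(u has_real_derivative du s) (at s within ?S)"
      unfolding u_def[abs_def] du_def .
    define D where "D = dst N (g s) (h s)"
    have D0: "D \<ge> 0" unfolding D_def by (rule dst_nonneg)
    have "\<bar>du s\<bar> \<le> (\<Sum>a=1..N. \<bar>2 * (g s a - h s a) * (F (g s) a - F (h s) a)\<bar>)"
      unfolding du_def by (rule sum_abs)
    also have "\<dots> \<le> (\<Sum>a=1..N. 2 * \<bar>g s a - h s a\<bar> * (L * D))"
    proof (rule sum_mono)
      fix a assume a: "a \<in> {1..N}"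
      have hb: "\<bar>F (g s) a - F (h s) a\<bar> \<le> L * D" unfolding D_def
        using LfL[OF a] box[OF s] by auto
      show "\<bar>2 * (g s a - h s a) * (F (g s) a - F (h s) a)\<bar> \<le> 2 * \<bar>g s a - h s a\<bar> * (L * D)"
      proof -
        have "\<bar>2 * (g s a - h s a) * (F (g s) a - F (h s) a)\<bar> = (2 * \<bar>g s a - h s a\<bar>) * \<bar>F (g s) a - F (h s) a\<bar>"
          by (simp only: abs_mult abs_numeral)
        also have "\<dots> \<le> (2 * \<bar>g s a - h s a\<bar>) * (L * D)"
          by (rule mult_left_mono[OF hb]) simp
        finally show ?thesis .
      qed
    qed
    also have "\<dots> = 2 * L * D * D"
      by (simp add: D_def dst_def sum_distrib_left sum_distrib_right mult_ac)
    also have "D * D \<le> u s * N"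
    proof -
      have "D\<^sup>2 \<le> (\<Sum>a=1..N. \<bar>g s a - h s a\<bar>\<^sup>2) * card {1..N}"
        unfolding D_def dst_def by (rule sum_squared_le_sum_of_squares)
      then show ?thesis by (simp add: u_def power2_eq_square)
    qed
    then have "2 * L * D * D \<le> 2 * L * (u s * N)" using L0 by (simp add: mult_left_mono mult.assoc)
    finally show "\<bar>du s\<bar> \<le> 2 * L * N * u s" by (simp add: mult_ac)
  next
    fix s assume "s \<in> ?S"
    show "0 \<le> u s" unfolding u_def by (intro sum_nonneg) auto
  next
    show "u 0 = 0" unfolding u_def using init by simp
  qed
  then have "\<forall>a\<in>{1..N}. (g t0 a - h t0 a) * (g t0 a - h t0 a) = 0"
    unfolding u_def by (subst (asm) sum_nonneg_eq_0_iff) auto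
  then show ?thesis using a by auto
qed



lemma one_plus_pos:
  fixes c t0 s :: real
  assumes ct: "1 + c * t0 > 0" and s: "s \<in> {min 0 t0..max 0 t0}"
  shows "1 + c * s > 0"
proof (cases "0 \<le> t0")
  case True
  then have s': "0 \<le> s" "s \<le> t0" using s by auto
  show ?thesis
  proof (cases "c \<ge> 0")
    case True then show ?thesis using s' by (simp add: add_pos_nonneg)
  next
    case False
    then have "c * t0 \<le> c * s" using s' by (simp add: mult_left_mono_neg)
    then show ?thesis using ct by linarith
  qed
next
  case False
  then have s': "t0 \<le> s" "s \<le> 0" using s by auto
  show ?thesis
  proof (cases "c \<ge> 0")
    case True
    then have "c * t0 \<le> c * s" using s' by (simp add: mult_left_mono)
    then show ?thesis using ct by linarith
  next
    case False then show ?thesis using s' by (simp add: add_pos_nonneg mult_nonpos_nonpos)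
  qed
qed

lemma part_c:
  fixes n :: nat and \<rho> :: real and J :: "real set" and g :: "real \<Rightarrow> nat \<Rightarrow> real"
  assumes sol: "RB_diag_solution n \<rho> J g"
    and eqX: "\<forall>j\<in>{1..4*n}. g 0 j = g 0 1" and e2: "g 0 (4*n+2) = g 0 (4*n+1)"
    and e3: "g 0 (4*n+3) = g 0 (4*n+1)" and D: "3 + n - 3*n*\<rho> \<noteq> 0"
    and c: "c = g 0 (4*n+1) / (g 0 1)^2 * (6 + 2*n - 6*n*\<rho>)"
    and t0: "t0 \<in> J" and ct: "1 + c*t0 > 0"
  shows "(\<forall>j\<in>{1..4*n}. g t0 j = g 0 1 * (1 + c*t0) powr (3*(1 - 2*n*\<rho>) / (6 + 2*n - 6*n*\<rho>)))
          \<and> (\<forall>k\<in>{1..3}. g t0 (4*n+k) = g 0 (4*n+1) * (1 + c*t0) powr (- (n*(1 + 3*\<rho>)) / (3 + n - 3*n*\<rho>)))"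
proof -
  define N where "N = 4*n+3"
  define x0 where "x0 = g 0 1"
  define z0 where "z0 = g 0 (4*n+1)"
  define p where "p = 3*(1 - 2*n*\<rho>) / (6 + 2*n - 6*n*\<rho>)"
  define q where "q = - (n*(1 + 3*\<rho>)) / (3 + n - 3*n*\<rho>)"
  have J0: "0 \<in> J" using sol unfolding RB_diag_solution_def by blast
  have x0p: "x0 > 0" using sol_pos[OF sol J0, of 1] by (simp add: x0_def)
  have z0p: "z0 > 0" using sol_pos[OF sol J0, of "4*n+1"] by (simp add: z0_def)
  have Dr: "3 + real n - 3 * real n * \<rho> \<noteq> 0" using D by simp
  have D2: "6 + 2 * real n - 6 * real n * \<rho> = 2 * (3 + real n - 3 * real n * \<rho>)" by simp
  have cr: "c = z0 / x0^2 * (2 * (3 + real n - 3 * real n * \<rho>))" using c by (simp add: x0_def z0_def)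
  have pr: "p = 3*(1 - 2 * real n * \<rho>) / (2 * (3 + real n - 3 * real n * \<rho>))" by (simp add: p_def)
  have qr: "q = - (real n * (1 + 3*\<rho>)) / (3 + real n - 3 * real n * \<rho>)" by (simp add: q_def)
  have pc: "p * c = (3 - 6 * real n * \<rho>) * z0 / x0^2"
  proof -
    define E where "E = 3 + real n - 3 * real n * \<rho>"
    have E0: "2 * E \<noteq> 0" using Dr by (simp add: E_def)
    have "p * c = 3*(1 - 2 * real n * \<rho>) / (2 * E) * (z0 / x0^2 * (2 * E))"
      unfolding pr cr E_def ..
    also have "\<dots> = 3*(1 - 2 * real n * \<rho>) * (z0 / x0^2)"
      using E0 by simp
    also have "\<dots> = (3 - 6 * real n * \<rho>) * z0 / x0^2" by (simp add: algebra_simps diff_divide_distrib add_divide_distrib)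
    finally show ?thesis .
  qed
  have qc: "q * c = (- (2 * real n + 6 * real n * \<rho>)) * z0 / x0^2"
  proof -
    define E where "E = 3 + real n - 3 * real n * \<rho>"
    have E0: "E \<noteq> 0" using Dr by (simp add: E_def)
    have "q * c = - (real n * (1 + 3*\<rho>)) / E * ((z0 / x0^2 * 2) * E)"
      unfolding qr cr E_def by (simp add: mult_ac)
    also have "\<dots> = - (real n * (1 + 3*\<rho>)) * (z0 / x0^2 * 2)"
      using E0 by simp
    also have "\<dots> = (- (2 * real n + 6 * real n * \<rho>)) * z0 / x0^2"
      by (simp add: algebra_simps diff_divide_distrib add_divide_distrib)
    finally show ?thesis .
  qed
  have qp: "q = 2 * p - 1"
    unfolding qr pr using Dr by (simp add: field_simps)
  define h where "h r a = (if a \<le> 4*n then x0 * (1 + c * r) powr p else z0 * (1 + c * r) powr q)" for r a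
  have hd: "((\<lambda>r. h r a) has_real_derivative qrhs n \<rho> (h s) a) (at s)"
    if s: "1 + c * s > 0" and a: "a \<in> {1..N}" for s a
  proof -
    let ?x = "x0 * (1 + c * s) powr p" and ?z = "z0 * (1 + c * s) powr q"
    have X: "\<And>j. j \<in> {1..4*n} \<Longrightarrow> h s j = ?x" by (simp add: h_def)
    have Z: "\<And>k. k \<in> {1..3} \<Longrightarrow> h s (4*n+k) = ?z" by (simp add: h_def)
    have xp: "?x > 0" using x0p s by simp
    show ?thesis
    proof (cases "a \<le> 4*n")
      case True
      then have "qrhs n \<rho> (h s) a = (3 - 6 * real n * \<rho>) * ?z / ?x"
        using qrhs_sym(1)[where G = "h s" and n = n and x = ?x and z = ?z and a = a and \<rho> = \<rho>, OF X Z xp] a by (auto simp: N_def)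
      moreover have "(\<lambda>r. h r a) = (\<lambda>r. x0 * (1 + c * r) powr p)" using True by (simp add: h_def)
      ultimately show ?thesis using h_deriv(1)[OF x0p z0p s pc qc qp] by simp
    next
      case False
      then have "qrhs n \<rho> (h s) a = - (2 * real n + 6 * real n * \<rho>) * ?z * ?z / (?x * ?x)"
        using qrhs_sym(2)[where G = "h s" and n = n and x = ?x and z = ?z and a = a and \<rho> = \<rho>, OF X Z xp] a by (auto simp: N_def)
      moreover have "(\<lambda>r. h r a) = (\<lambda>r. z0 * (1 + c * r) powr q)" using False by (simp add: h_def)
      ultimately show ?thesis using h_deriv(2)[OF x0p z0p s pc qc qp] by simp
    qed
  qed
  let ?S = "{min 0 t0..max 0 t0}"
  have SJ: "?S \<subseteq> J"
  proof
    fix s assume s: "s \<in> ?S"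
    have iv: "is_interval J" using sol unfolding RB_diag_solution_def by blast
    show "s \<in> J"
    proof (cases "0 \<le> t0")
      case True then show ?thesis using mem_is_interval_1_I[OF iv J0 t0] s by auto
    next
      case False then show ?thesis using mem_is_interval_1_I[OF iv t0 J0] s by auto
    qed
  qed
  have cS: "\<And>s. s \<in> ?S \<Longrightarrow> 1 + c * s > 0" using one_plus_pos[OF ct] by blast
  have dg: "((\<lambda>r. g r a) has_real_derivative qrhs n \<rho> (g s) a) (at s within ?S)"
    if "s \<in> ?S" "a \<in> {1..N}" for s a
    using that SJ by (intro has_field_derivative_subset[OF sol_der[OF sol]]) (auto simp: N_def)
  have dh: "((\<lambda>r. h r a) has_real_derivative qrhs n \<rho> (h s) a) (at s within ?S)"
    if "s \<in> ?S" "a \<in> {1..N}" for s a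
    using hd[OF cS[OF that(1)] that(2)] by (rule has_field_derivative_at_within)
  have cpt: "compact ?S" "?S \<noteq> {}" by auto
  have bg: "\<exists>m>0. \<forall>a\<in>{1..N}. \<forall>s\<in>?S. m \<le> g s a \<and> g s a \<le> 1/m"
  proof (rule fin_bounds[where f = "\<lambda>a s. g s a"], simp)
    fix a assume a: "a \<in> {1..N}"
    show "\<exists>m>0. \<forall>s\<in>?S. m \<le> g s a \<and> g s a \<le> 1/m"
    proof (rule cont_bounds[OF cpt])
      show "continuous_on ?S (\<lambda>s. g s a)" by (rule DERIV_continuous_on[OF dg[OF _ a]])
      show "\<And>s. s \<in> ?S \<Longrightarrow> g s a > 0" using sol_pos[OF sol] SJ a by (auto simp: N_def)
    qed
  qed
  have bh: "\<exists>m>0. \<forall>a\<in>{1..N}. \<forall>s\<in>?S. m \<le> h s a \<and> h s a \<le> 1/m"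
  proof (rule fin_bounds[where f = "\<lambda>a s. h s a"], simp)
    fix a assume a: "a \<in> {1..N}"
    show "\<exists>m>0. \<forall>s\<in>?S. m \<le> h s a \<and> h s a \<le> 1/m"
    proof (rule cont_bounds[OF cpt])
      show "continuous_on ?S (\<lambda>s. h s a)" by (rule DERIV_continuous_on[OF dh[OF _ a]])
      show "h s a > 0" if s: "s \<in> ?S" for s
        using cS[OF s] x0p z0p by (simp add: h_def)
    qed
  qed
  obtain m1 where m1: "m1 > 0" "\<forall>a\<in>{1..N}. \<forall>s\<in>?S. m1 \<le> g s a \<and> g s a \<le> 1/m1" using bg by blast
  obtain m2 where m2: "m2 > 0" "\<forall>a\<in>{1..N}. \<forall>s\<in>?S. m2 \<le> h s a \<and> h s a \<le> 1/m2" using bh by blast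
  define m where "m = min m1 m2"
  have m0: "m > 0" using m1 m2 by (simp add: m_def)
  have box: "inbox N m (g s) \<and> inbox N m (h s)" if s: "s \<in> ?S" for s
    unfolding inbox_def
    using m1(2) m2(2) s bound_mono[OF m0, of m1] bound_mono[OF m0, of m2] by (simp add: m_def)
  have init: "g 0 a = h 0 a" if a: "a \<in> {1..N}" for a
  proof (cases "a \<le> 4*n")
    case True
    have "g 0 a = g 0 1" by (rule bspec[OF eqX]) (use a True in \<open>auto simp: N_def\<close>)
    then show ?thesis using True by (simp add: h_def x0_def)
  next
    case False
    then have "a = 4*n+1 \<or> a = 4*n+2 \<or> a = 4*n+3" using a by (auto simp: N_def)
    then show ?thesis using False e2 e3 by (auto simp: h_def z0_def)
  qed
  have lipN: "\<And>a. a \<in> {1..N} \<Longrightarrow> lipb N m (\<lambda>G. qrhs n \<rho> G a)"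
    unfolding N_def by (rule lipb_qrhs[OF m0])
  have eq: "g t0 a = h t0 a" if a: "a \<in> {1..N}" for a
    by (rule uniq[where F = "\<lambda>G a. qrhs n \<rho> G a", OF m0 box lipN dg dh init a])
  show ?thesis
  proof
    show "\<forall>j\<in>{1..4*n}. g t0 j = g 0 1 * (1 + c*t0) powr (3*(1 - 2*n*\<rho>) / (6 + 2*n - 6*n*\<rho>))"
    proof
      fix j assume j: "j \<in> {1..4*n}"
      then have "g t0 j = h t0 j" by (intro eq) (auto simp: N_def)
      then show "g t0 j = g 0 1 * (1 + c*t0) powr (3*(1 - 2*n*\<rho>) / (6 + 2*n - 6*n*\<rho>))"
        using j by (simp add: h_def x0_def p_def)
    qed
    show "\<forall>k\<in>{1..3}. g t0 (4*n+k) = g 0 (4*n+1) * (1 + c*t0) powr (- (n*(1 + 3*\<rho>)) / (3 + n - 3*n*\<rho>))"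
    proof
      fix k :: nat assume k: "k \<in> {1..3}"
      then have "g t0 (4*n+k) = h t0 (4*n+k)" by (intro eq) (auto simp: N_def)
      then show "g t0 (4*n+k) = g 0 (4*n+1) * (1 + c*t0) powr (- (n*(1 + 3*\<rho>)) / (3 + n - 3*n*\<rho>))"
        using k by (simp add: h_def z0_def q_def)
    qed
  qed
qed


theorem theorem2p7:
  fixes n :: nat and \<rho> :: real and J :: "real set" and g :: "real \<Rightarrow> nat \<Rightarrow> real"
  assumes n: "n \<ge> 1"
    and sol: "RB_diag_solution n \<rho> J g"
  shows
    "(1 + 3*\<rho> \<noteq> 0 \<longrightarrow>
        (\<forall>t\<in>J. ((\<lambda>s. (\<Prod>j=1..4*n. g s j) *
                   (g s (4*n+1) * g s (4*n+2) * g s (4*n+3)) powr (2*(1 - 2*n*\<rho>) / (1 + 3*\<rho>)))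
                 has_real_derivative 0) (at t within J)))
     \<and> (\<rho> < 0 \<and> {0..} \<subseteq> J \<longrightarrow>
        (\<forall>k\<in>{4*n+1..4*n+3}. filterlim (\<lambda>t. integral {0..t} (\<lambda>r. g r k)) at_top at_top))
     \<and> ((\<forall>j\<in>{1..4*n}. g 0 j = g 0 1) \<and> g 0 (4*n+2) = g 0 (4*n+1) \<and> g 0 (4*n+3) = g 0 (4*n+1)
         \<and> 3 + n - 3*n*\<rho> \<noteq> 0 \<longrightarrow>
        (let c = g 0 (4*n+1) / (g 0 1)^2 * (6 + 2*n - 6*n*\<rho>) in
          \<forall>t\<in>J. 1 + c*t > 0 \<longrightarrow>
            (\<forall>j\<in>{1..4*n}. g t j = g 0 1 * (1 + c*t) powr (3*(1 - 2*n*\<rho>) / (6 + 2*n - 6*n*\<rho>)))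
          \<and> (\<forall>k\<in>{1..3}. g t (4*n+k) = g 0 (4*n+1) * (1 + c*t) powr (- (n*(1 + 3*\<rho>)) / (3 + n - 3*n*\<rho>)))))"
proof -
  have A: "1 + 3*\<rho> \<noteq> 0 \<longrightarrow>
        (\<forall>t\<in>J. ((\<lambda>s. (\<Prod>j=1..4*n. g s j) *
                   (g s (4*n+1) * g s (4*n+2) * g s (4*n+3)) powr (2*(1 - 2*n*\<rho>) / (1 + 3*\<rho>)))
                 has_real_derivative 0) (at t within J))"
  proof (intro impI ballI)
    fix t assume h: "1 + 3*\<rho> \<noteq> 0" and t: "t \<in> J"
    have e: "real (2*n) = 2 * real n" by simp
    show "((\<lambda>s. (\<Prod>j=1..4*n. g s j) *
                   (g s (4*n+1) * g s (4*n+2) * g s (4*n+3)) powr (2*(1 - 2*n*\<rho>) / (1 + 3*\<rho>)))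
                 has_real_derivative 0) (at t within J)"
      using part_a[OF sol h t] by (simp only: e)
  qed
  have B: "\<rho> < 0 \<and> {0..} \<subseteq> J \<longrightarrow>
        (\<forall>k\<in>{4*n+1..4*n+3}. filterlim (\<lambda>t. integral {0..t} (\<lambda>r. g r k)) at_top at_top)"
    using part_b[OF sol] by blast
  have C: "(\<forall>j\<in>{1..4*n}. g 0 j = g 0 1) \<and> g 0 (4*n+2) = g 0 (4*n+1) \<and> g 0 (4*n+3) = g 0 (4*n+1)
         \<and> 3 + n - 3*n*\<rho> \<noteq> 0 \<longrightarrow>
        (let c = g 0 (4*n+1) / (g 0 1)^2 * (6 + 2*n - 6*n*\<rho>) in
          \<forall>t\<in>J. 1 + c*t > 0 \<longrightarrow>
            (\<forall>j\<in>{1..4*n}. g t j = g 0 1 * (1 + c*t) powr (3*(1 - 2*n*\<rho>) / (6 + 2*n - 6*n*\<rho>)))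
          \<and> (\<forall>k\<in>{1..3}. g t (4*n+k) = g 0 (4*n+1) * (1 + c*t) powr (- (n*(1 + 3*\<rho>)) / (3 + n - 3*n*\<rho>))))"
  proof (intro impI)
    assume H: "(\<forall>j\<in>{1..4*n}. g 0 j = g 0 1) \<and> g 0 (4*n+2) = g 0 (4*n+1) \<and> g 0 (4*n+3) = g 0 (4*n+1)
         \<and> 3 + n - 3*n*\<rho> \<noteq> 0"
    show "let c = g 0 (4*n+1) / (g 0 1)^2 * (6 + 2*n - 6*n*\<rho>) in
          \<forall>t\<in>J. 1 + c*t > 0 \<longrightarrow>
            (\<forall>j\<in>{1..4*n}. g t j = g 0 1 * (1 + c*t) powr (3*(1 - 2*n*\<rho>) / (6 + 2*n - 6*n*\<rho>)))
          \<and> (\<forall>k\<in>{1..3}. g t (4*n+k) = g 0 (4*n+1) * (1 + c*t) powr (- (n*(1 + 3*\<rho>)) / (3 + n - 3*n*\<rho>)))"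
      unfolding Let_def
    proof (intro ballI impI)
      fix t assume t: "t \<in> J"
        and ct: "1 + g 0 (4*n+1) / (g 0 1)^2 * (6 + 2*n - 6*n*\<rho>) * t > 0"
      show "(\<forall>j\<in>{1..4*n}. g t j = g 0 1 * (1 + g 0 (4*n+1) / (g 0 1)^2 * (6 + 2*n - 6*n*\<rho>) * t) powr (3*(1 - 2*n*\<rho>) / (6 + 2*n - 6*n*\<rho>)))
          \<and> (\<forall>k\<in>{1..3}. g t (4*n+k) = g 0 (4*n+1) * (1 + g 0 (4*n+1) / (g 0 1)^2 * (6 + 2*n - 6*n*\<rho>) * t) powr (- (n*(1 + 3*\<rho>)) / (3 + n - 3*n*\<rho>)))"
        by (rule part_c[OF sol H[THEN conjunct1] H[THEN conjunct2, THEN conjunct1]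
              H[THEN conjunct2, THEN conjunct2, THEN conjunct1] H[THEN conjunct2, THEN conjunct2, THEN conjunct2] refl t ct])
    qed
  qed
  show ?thesis using A B C by blast
qed

end
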